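(* Let $n\ge3$ and $A\subseteq[n-1]$ nonempty, let $w=\max A$ and $A'=A\setminus\{w\}$. If $w=n-1$, then $f_n(A)=2f_{n-1}(A')$.
   Context: For $m\ge1$ and a set $B$ of positive integers, $f_m(B)$ denotes the number of linear orders $q$ on $[m]$ such that for every triple $i<j<k$ in $[m]$: if $j\in B$ then $i$ is not ranked last among $\{i,j,k\}$ in $q$, and if $j\notin B$ then $k$ is not ranked first among $\{i,j,k\}$ in $q$ (i.e. $f_m(B)$ is the size of the set-alternating domain on $[m]$ generated by $B\cap[m]$). *)

theory Defs
  imports Main
begin

(* A linear order q on [m] is represented as a list enumerating {1..m} without
   repetition; q ! 0 is ranked first, the last entry is ranked last. *)
definition rank :: "nat list \<Rightarrow> nat \<Rightarrow> nat" where
  "rank q x = (LEAST p. p < length q \<and> q ! p = x)"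

definition set_alt_domain :: "nat \<Rightarrow> nat set \<Rightarrow> nat list set" where
  "set_alt_domain m B = {q. distinct q \<and> set q = {1..m} \<and>
     (\<forall>i j k. 1 \<le> i \<and> i < j \<and> j < k \<and> k \<le> m \<longrightarrow>
        (j \<in> B \<longrightarrow> \<not> (rank q j < rank q i \<and> rank q k < rank q i)) \<and>
        (j \<notin> B \<longrightarrow> \<not> (rank q k < rank q i \<and> rank q k < rank q j)))}"

definition f :: "nat \<Rightarrow> nat set \<Rightarrow> nat" where
  "f m B = card (set_alt_domain m B)"

end

theory Submission
  imports Defs
begin

lemma rank_eq: "distinct q \<Longrightarrow> p < length q \<Longrightarrow> q ! p = x \<Longrightarrow> rank q x = p"
  unfolding rank_def
  by (rule Least_equality) (auto simp: nth_eq_iff_index_eq)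

lemma rank_props: "x \<in> set q \<Longrightarrow> rank q x < length q \<and> q ! rank q x = x"
  unfolding rank_def
  by (rule LeastI_ex) (auto simp: in_set_conv_nth)

lemma rank_snoc: "distinct (xs @ [y]) \<Longrightarrow> x \<in> set xs \<Longrightarrow> rank (xs @ [y]) x = rank xs x"
  using rank_props[of x xs] by (intro rank_eq) (auto simp: nth_append)

lemma rank_snoc_last: "distinct (xs @ [y]) \<Longrightarrow> rank (xs @ [y]) y = length xs"
  by (intro rank_eq) auto

lemma rank_map: "distinct (map g xs) \<Longrightarrow> x \<in> set xs \<Longrightarrow> rank (map g xs) (g x) = rank xs x"
  using rank_props[of x xs] by (intro rank_eq) auto

definition sw :: "nat \<Rightarrow> nat \<Rightarrow> nat" where
  "sw m x = (if x = m then Suc m else if x = Suc m then m else x)"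

lemma sw_sw[simp]: "sw m (sw m x) = x" by (simp add: sw_def)
lemma inj_sw: "inj (sw m)" by (metis injI sw_sw)
lemma map_sw_sw[simp]: "map (sw m) (map (sw m) xs) = xs" by (induct xs) auto

theorem proposition4:
  fixes n :: nat and A :: "nat set"
  assumes "n \<ge> 3" and "A \<subseteq> {1..n-1}" and "A \<noteq> {}"
    and "Max A = n - 1"
  shows "f n A = 2 * f (n - 1) (A - {Max A})"
proof -
  define m where "m = n - 1"
  have n: "n = Suc m" using assms(1) m_def by simp
  have m3: "m \<ge> 2" using assms(1) m_def by simp
  have fA: "finite A" using assms(2) finite_subset by blast
  have mA: "m \<in> A" using Max_in[OF fA assms(3)] assms(4) m_def by simp
  define A' where "A' = A - {m}"
  define D where "D = set_alt_domain n A"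
  define D' where "D' = set_alt_domain m A'"
  define g1 where "g1 = (\<lambda>q::nat list. q @ [n])"
  define g2 where "g2 = (\<lambda>q. map (sw m) q @ [m])"
  have memA: "j < m \<Longrightarrow> (j \<in> A') = (j \<in> A)" for j by (auto simp: A'_def)
  have D'fin: "finite D'"
  proof (rule finite_subset)
    show "D' \<subseteq> {xs. set xs \<subseteq> {1..m} \<and> length xs = m}"
      by (auto simp: D'_def set_alt_domain_def dest: distinct_card)
    show "finite {xs. set xs \<subseteq> {1..m} \<and> length xs = m}"
      by (rule finite_lists_length_eq) simp
  qed
  have DD: "D = g1 ` D' \<union> g2 ` D'"
  proof (intro equalityI subsetI)
    fix q assume "q \<in> g1 ` D' \<union> g2 ` D'"
    then show "q \<in> D"
    proof
      assume "q \<in> g1 ` D'"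
      then obtain q' where q': "q' \<in> D'" and qd: "q = q' @ [n]" by (auto simp: g1_def)
      have dq': "distinct q'" and sq': "set q' = {1..m}" using q' by (auto simp: D'_def set_alt_domain_def)
      have C': "\<And>i j k. 1 \<le> i \<Longrightarrow> i < j \<Longrightarrow> j < k \<Longrightarrow> k \<le> m \<Longrightarrow>
        (j \<in> A' \<longrightarrow> \<not> (rank q' j < rank q' i \<and> rank q' k < rank q' i)) \<and>
        (j \<notin> A' \<longrightarrow> \<not> (rank q' k < rank q' i \<and> rank q' k < rank q' j))"
        using q' by (auto simp: D'_def set_alt_domain_def)
      have dq: "distinct q" using dq' sq' n qd by auto
      have sq: "set q = {1..n}" using sq' n qd by auto
      have rk: "x \<in> {1..m} \<Longrightarrow> rank q x = rank q' x" for x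
        using rank_snoc[of q' n x] dq qd sq' by auto
      have rn: "rank q n = m" using rank_snoc_last[of q' n] dq qd sq' dq' distinct_card by fastforce
      have rlt: "x \<in> {1..m} \<Longrightarrow> rank q x < m" for x
        using rk rank_props[of x q'] sq' dq' distinct_card by fastforce
      show "q \<in> D" unfolding D_def set_alt_domain_def
      proof (rule CollectI, rule conjI[OF dq], rule conjI[OF sq], intro allI impI)
        fix i j k assume h: "1 \<le> i \<and> i < j \<and> j < k \<and> k \<le> n"
        show "(j \<in> A \<longrightarrow> \<not> (rank q j < rank q i \<and> rank q k < rank q i)) \<and>
          (j \<notin> A \<longrightarrow> \<not> (rank q k < rank q i \<and> rank q k < rank q j))"
        proof (cases "k = n")
          case True
          then show ?thesis using rn rlt[of i] rlt[of j] h n by auto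
        next
          case False
          then have "k \<le> m" using h n by auto
          then show ?thesis using C'[of i j k] h rk[of i] rk[of j] rk[of k] memA[of j] by auto
        qed
      qed
    next
      assume "q \<in> g2 ` D'"
      then obtain q' where q': "q' \<in> D'" and qd: "q = map (sw m) q' @ [m]" by (auto simp: g2_def)
      have dq': "distinct q'" and sq': "set q' = {1..m}" using q' by (auto simp: D'_def set_alt_domain_def)
      have C': "\<And>i j k. 1 \<le> i \<Longrightarrow> i < j \<Longrightarrow> j < k \<Longrightarrow> k \<le> m \<Longrightarrow>
        (j \<in> A' \<longrightarrow> \<not> (rank q' j < rank q' i \<and> rank q' k < rank q' i)) \<and>
        (j \<notin> A' \<longrightarrow> \<not> (rank q' k < rank q' i \<and> rank q' k < rank q' j))"
        using q' by (auto simp: D'_def set_alt_domain_def)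
      have smap: "set (map (sw m) q') = {1..m-1} \<union> {n}"
      proof -
        have "sw m ` {1..m} = {1..m-1} \<union> {n}"
        proof (intro equalityI subsetI)
          fix x assume "x \<in> sw m ` {1..m}"
          then show "x \<in> {1..m-1} \<union> {n}" using n by (auto simp: sw_def)
        next
          fix x assume x: "x \<in> {1..m-1} \<union> {n}"
          show "x \<in> sw m ` {1..m}"
          proof (cases "x = n")
            case True then show ?thesis using n m3 by (intro image_eqI[of _ _ m]) (auto simp: sw_def)
          next
            case False then show ?thesis using x n m3 by (intro image_eqI[of _ _ x]) (auto simp: sw_def)
          qed
        qed
        then show ?thesis using sq' by simp
      qed
      have dm: "distinct (map (sw m) q')" by (simp add: distinct_map dq' inj_on_subset[OF inj_sw subset_UNIV])
      have dq: "distinct q" using dm smap n m3 qd by auto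
      have sq: "set q = {1..n}" using smap n m3 qd by auto
      have rk: "x \<in> {1..m} \<Longrightarrow> rank q (sw m x) = rank q' x" for x
        using rank_snoc[of "map (sw m) q'" m "sw m x"] rank_map[OF dm, of x] dq qd sq' by auto
      have rn: "rank q m = m" using rank_snoc_last[of "map (sw m) q'" m] dq qd sq' dq' distinct_card by fastforce
      have rlt: "x \<in> {1..m} \<Longrightarrow> rank q' x < m" for x
        using rank_props[of x q'] sq' dq' distinct_card by fastforce
      show "q \<in> D" unfolding D_def set_alt_domain_def
      proof (rule CollectI, rule conjI[OF dq], rule conjI[OF sq], intro allI impI)
        fix i j k assume h: "1 \<le> i \<and> i < j \<and> j < k \<and> k \<le> n"
        show "(j \<in> A \<longrightarrow> \<not> (rank q j < rank q i \<and> rank q k < rank q i)) \<and>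
          (j \<notin> A \<longrightarrow> \<not> (rank q k < rank q i \<and> rank q k < rank q j))"
        proof (cases "k = m \<or> j = m")
          case True
          have ri: "rank q i < m" using rk[of i] rlt[of i] h n True by (auto simp: sw_def)
          have rj: "j \<noteq> m \<Longrightarrow> rank q j < m" using rk[of j] rlt[of j] h n True by (auto simp: sw_def)
          show ?thesis using True ri rj rn mA by auto
        next
          case False
          define k' where "k' = (if k = n then m else k)"
          have kk: "k = sw m k'" using False h n by (auto simp: k'_def sw_def)
          have ii: "i = sw m i" and jj: "j = sw m j" using False h n by (auto simp: sw_def)
          have hk: "j < k'" "k' \<le> m" using False h n by (auto simp: k'_def)
          have mem: "i \<in> {1..m}" "j \<in> {1..m}" "k' \<in> {1..m}" using h hk by auto
          have e: "rank q i = rank q' i" "rank q j = rank q' j" "rank q k = rank q' k'"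
            using rk[OF mem(1), folded ii] rk[OF mem(2), folded jj] rk[OF mem(3), folded kk] by auto
          show ?thesis
            using C'[of i j k'] h hk e memA[of j] by auto
        qed
      qed
    qed
  next
    fix q assume qD: "q \<in> D"
    have dq: "distinct q" and sq: "set q = {1..n}" using qD by (auto simp: D_def set_alt_domain_def)
    have C: "\<And>i j k. 1 \<le> i \<Longrightarrow> i < j \<Longrightarrow> j < k \<Longrightarrow> k \<le> n \<Longrightarrow>
        (j \<in> A \<longrightarrow> \<not> (rank q j < rank q i \<and> rank q k < rank q i)) \<and>
        (j \<notin> A \<longrightarrow> \<not> (rank q k < rank q i \<and> rank q k < rank q j))"
      using qD by (auto simp: D_def set_alt_domain_def)
    have lq: "length q = n" using distinct_card[OF dq] sq by simp
    have qne: "q \<noteq> []" using lq n by auto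
    define L where "L = last q"
    define b where "b = butlast q"
    have qb: "q = b @ [L]" using qne by (simp add: b_def L_def)
    have lb: "length b = m" using lq n by (simp add: b_def)
    have rL: "rank q L = m"
      using rank_eq[OF dq, of m L] lq n qne by (simp add: L_def last_conv_nth)
    have rlt: "x \<in> set q \<Longrightarrow> rank q x < n" for x using rank_props[of x q] lq by simp
    have rinj: "x \<in> set q \<Longrightarrow> y \<in> set q \<Longrightarrow> rank q x = rank q y \<Longrightarrow> x = y" for x y
      using rank_props[of x q] rank_props[of y q] by metis
    have Lq: "L \<in> set q" using qne by (simp add: L_def)
    have Lmn: "L = m \<or> L = n"
    proof (rule ccontr)
      assume a: "\<not> (L = m \<or> L = n)"
      have "1 \<le> L" "L < m" using Lq sq a n by auto
      then have c: "\<not> (rank q m < rank q L \<and> rank q n < rank q L)" using C[of L m n] mA n by auto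
      have "m \<in> set q" "n \<in> set q" using sq n m3 by auto
      then have "rank q m < m" "rank q n < m" using rlt rinj rL a Lq n
        by (metis less_SucE)+
      then show False using c rL by simp
    qed
    have db: "distinct b" and Lb: "L \<notin> set b" using dq qb by auto
    have sb: "set b = {1..n} - {L}" using sq qb Lb by auto
    have rb: "x \<in> set b \<Longrightarrow> rank b x = rank q x" for x using rank_snoc[of b L x] dq qb by simp
    show "q \<in> g1 ` D' \<union> g2 ` D'"
    proof (cases "L = n")
      case True
      have "b \<in> D'" unfolding D'_def set_alt_domain_def
      proof (rule CollectI, rule conjI[OF db], rule conjI[rotated], intro allI impI)
        have "{1..Suc m} - {Suc m} = {1..m}" by auto
        then show "set b = {1..m}" using sb True n by simp
      next
        fix i j k assume h: "1 \<le> i \<and> i < j \<and> j < k \<and> k \<le> m"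
        have bm: "set b = {1..m}" using sb True n by (simp add: atLeastAtMostSuc_conv)
        have mem: "i \<in> set b" "j \<in> set b" "k \<in> set b" unfolding bm using h by auto
        show "(j \<in> A' \<longrightarrow> \<not> (rank b j < rank b i \<and> rank b k < rank b i)) \<and>
          (j \<notin> A' \<longrightarrow> \<not> (rank b k < rank b i \<and> rank b k < rank b j))"
          using C[of i j k] h n memA[of j] rb[OF mem(1)] rb[OF mem(2)] rb[OF mem(3)] by auto
      qed
      then show ?thesis using qb True by (auto simp: g1_def)
    next
      case False
      then have Lm: "L = m" using Lmn by simp
      define q' where "q' = map (sw m) b"
      have bq': "b = map (sw m) q'" unfolding q'_def by (rule map_sw_sw[symmetric])
      have dq': "distinct q'" by (simp add: q'_def distinct_map db inj_on_subset[OF inj_sw subset_UNIV])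
      have bm: "set b = {1..Suc m} - {m}" using sb Lm n by simp
      have sq'': "set q' = {1..m}"
      proof (intro equalityI subsetI)
        fix x assume "x \<in> set q'"
        then obtain y where y: "y \<in> set b" "x = sw m y" by (auto simp: q'_def)
        have "y \<in> {1..Suc m} - {m}" using y(1) bm by simp
        then show "x \<in> {1..m}" using m3 unfolding y(2) sw_def by auto
      next
        fix x assume x: "x \<in> {1..m}"
        have "sw m x \<in> {1..Suc m} - {m}" using x unfolding sw_def by auto
        then have "sw m x \<in> set b" using bm by simp
        then show "x \<in> set q'" unfolding q'_def by (metis image_eqI set_map sw_sw)
      qed
      have "q' \<in> D'" unfolding D'_def set_alt_domain_def
      proof (rule CollectI, rule conjI[OF dq'], rule conjI[rotated], intro allI impI)
        show "set q' = {1..m}" by (rule sq'')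
      next
        fix i j k assume h: "1 \<le> i \<and> i < j \<and> j < k \<and> k \<le> m"
        define k' where "k' = (if k = m then n else k)"
        have kk: "k' = sw m k" using h n by (auto simp: k'_def sw_def)
        have ii: "i = sw m i" and jj: "j = sw m j" using h n by (auto simp: sw_def)
        have hk: "j < k'" "k' \<le> n" using h n by (auto simp: k'_def)
        have rq': "x \<in> set q' \<Longrightarrow> rank q' x = rank q (sw m x)" for x
          using rank_map[of "sw m" q' x] bq' db rb[of "sw m x"] by auto
        have mem: "i \<in> set q'" "j \<in> set q'" "k \<in> set q'" using h sq'' by auto
        have e: "rank q' i = rank q i" "rank q' j = rank q j" "rank q' k = rank q k'"
          using rq'[OF mem(1), folded ii] rq'[OF mem(2), folded jj] rq'[OF mem(3), folded kk] by auto
        show "(j \<in> A' \<longrightarrow> \<not> (rank q' j < rank q' i \<and> rank q' k < rank q' i)) \<and>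
          (j \<notin> A' \<longrightarrow> \<not> (rank q' k < rank q' i \<and> rank q' k < rank q' j))"
          using C[of i j k'] h hk e memA[of j] by auto
      qed
      then show ?thesis using qb Lm bq' by (auto simp: g2_def)
    qed
  qed
  have disj: "g1 ` D' \<inter> g2 ` D' = {}"
    using n by (auto simp: g1_def g2_def)
  have inj1: "inj_on g1 D'" by (auto simp: g1_def inj_on_def)
  have inj2: "inj_on g2 D'"
    unfolding g2_def inj_on_def by (metis butlast_snoc map_sw_sw)
  have "card D = card D' + card D'"
    using DD disj D'fin card_Un_disjoint[of "g1 ` D'" "g2 ` D'"] card_image[OF inj1] card_image[OF inj2]
    by simp
  then show ?thesis
    by (simp add: f_def D_def D'_def A'_def m_def assms(4))
qed

end
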